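(* Assume the probability measure $\mu$ on $\mathbb R^d$ satisfies a weak Poincaré inequality with rate $\beta_\mu$. Then for every $p>2$, every $s>0$ and every smooth bounded $f$, $\mathrm{Var}_\mu(f)\le\beta_\mu\!\left(\frac{s^{p/(p-2)}}{2^{(3p-2)/(p-2)}}\right)\int|\nabla f|^2d\mu+s\,\|f-\mu(f)\|^2_{L^p(\mu)}$.
   Context: A probability measure $\mu$ on $\mathbb R^d$ satisfies a weak Poincaré inequality with rate $\beta_\mu$ if $\beta_\mu:(0,\infty)\to(0,\infty]$ is non-increasing and for all $s>0$ and all smooth bounded $f$, $\mathrm{Var}_\mu(f)\le \beta_\mu(s)\int|\nabla f|^2d\mu+s\,\mathrm{Osc}^2(f)$, where $\mathrm{Osc}(f)=\sup f-\inf f$. *)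

theory Defs
  imports "HOL-Probability.Probability"
begin

text \<open>Iterated partial derivative of a real function on a Euclidean space, along the
  directions in the list vs (innermost first), using the Frechet derivative.\<close>
definition iter_partial :: "'a::euclidean_space list \<Rightarrow> ('a \<Rightarrow> real) \<Rightarrow> 'a \<Rightarrow> real" where
  "iter_partial vs f = fold (\<lambda>v g. \<lambda>x. frechet_derivative g (at x) v) vs f"

definition smooth_fun :: "('a::euclidean_space \<Rightarrow> real) \<Rightarrow> bool" where
  "smooth_fun f \<longleftrightarrow> (\<forall>vs. set vs \<subseteq> Basis \<longrightarrow> (\<forall>x. iter_partial vs f differentiable (at x)))"

definition grad_sq :: "('a::euclidean_space \<Rightarrow> real) \<Rightarrow> 'a \<Rightarrow> real" where
  "grad_sq f x = (\<Sum>b\<in>Basis. (frechet_derivative f (at x) b)\<^sup>2)"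

definition osc :: "('a \<Rightarrow> real) \<Rightarrow> real" where
  "osc f = (SUP x. f x) - (INF x. f x)"

definition var :: "'a measure \<Rightarrow> ('a \<Rightarrow> real) \<Rightarrow> real" where
  "var \<mu> f = (\<integral>x. (f x - (\<integral>y. f y \<partial>\<mu>))\<^sup>2 \<partial>\<mu>)"

definition Lp_norm :: "'a measure \<Rightarrow> real \<Rightarrow> ('a \<Rightarrow> real) \<Rightarrow> real" where
  "Lp_norm \<mu> p f = (\<integral>x. \<bar>f x\<bar> powr p \<partial>\<mu>) powr (1 / p)"

text \<open>Weak Poincare inequality with rate beta (values in (0,infinity], as ennreal).\<close>
definition weak_poincare :: "'a::euclidean_space measure \<Rightarrow> (real \<Rightarrow> ennreal) \<Rightarrow> bool" where
  "weak_poincare \<mu> \<beta> \<longleftrightarrow>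
     (\<forall>s t. 0 < s \<longrightarrow> s \<le> t \<longrightarrow> \<beta> t \<le> \<beta> s) \<and> (\<forall>s>0. 0 < \<beta> s) \<and>
     (\<forall>s>0. \<forall>f. smooth_fun f \<and> bounded (range f) \<longrightarrow>
        ennreal (var \<mu> f) \<le> \<beta> s * (\<integral>\<^sup>+x. ennreal (grad_sq f x) \<partial>\<mu>) + ennreal (s * (osc f)\<^sup>2))"

end

theory Submission
  imports Defs
begin

definition pd :: "'a::euclidean_space \<Rightarrow> ('a \<Rightarrow> real) \<Rightarrow> 'a \<Rightarrow> real" where
  "pd b h = (\<lambda>x. frechet_derivative h (at x) b)"

lemma iter_partial_Cons: "iter_partial (v # vs) h = iter_partial vs (pd v h)"
  by (simp add: iter_partial_def pd_def)

lemma iter_partial_snoc: "iter_partial (vs @ [v]) h = pd v (iter_partial vs h)"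
  by (simp add: iter_partial_def pd_def)

lemma iter_partial_Nil: "iter_partial [] h = h"
  by (simp add: iter_partial_def)

inductive_set Aset :: "('a::euclidean_space \<Rightarrow> real) \<Rightarrow> (nat \<Rightarrow> real \<Rightarrow> real) \<Rightarrow> ('a \<Rightarrow> real) set"
  for f D where
  base1: "set vs \<subseteq> Basis \<Longrightarrow> iter_partial vs f \<in> Aset f D"
| base2: "(\<lambda>x. D k (f x)) \<in> Aset f D"
| add: "g \<in> Aset f D \<Longrightarrow> h \<in> Aset f D \<Longrightarrow> (\<lambda>x. g x + h x) \<in> Aset f D"
| mult: "g \<in> Aset f D \<Longrightarrow> h \<in> Aset f D \<Longrightarrow> (\<lambda>x. g x * h x) \<in> Aset f D"

lemma comp_deriv:
  assumes f: "f differentiable (at x)"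
    and D: "\<forall>k x. (D k has_real_derivative D (Suc k) x) (at x)"
  shows "((\<lambda>x. D k (f x)) has_derivative (\<lambda>v. D (Suc k) (f x) * frechet_derivative f (at x) v)) (at x)"
proof -
  have f': "(f has_derivative frechet_derivative f (at x)) (at x)"
    using f frechet_derivative_works by blast
  have "(D k has_derivative (\<lambda>v. D (Suc k) (f x) * v)) (at (f x))"
    using D unfolding has_field_derivative_def by blast
  from has_derivative_compose[OF f' this] show ?thesis by (simp add: o_def)
qed

lemma Aset_closed:
  assumes sm: "smooth_fun f"
    and D: "\<forall>k x. (D k has_real_derivative D (Suc k) x) (at x)"
    and g: "g \<in> Aset f D"
  shows "(\<forall>x. g differentiable (at x)) \<and> (\<forall>b\<in>Basis. pd b g \<in> Aset f D)"
  using g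
proof induction
  case (base1 vs)
  have "\<forall>x. iter_partial vs f differentiable (at x)" using sm base1 unfolding smooth_fun_def by blast
  moreover have "pd b (iter_partial vs f) \<in> Aset f D" if "b \<in> Basis" for b
    using Aset.base1[of "vs @ [b]" f D] base1 that by (simp add: iter_partial_snoc)
  ultimately show ?case by blast
next
  case (base2 k)
  have fd: "f differentiable (at x)" for x
    using sm unfolding smooth_fun_def by (metis empty_subsetI iter_partial_Nil list.set(1))
  have dk: "((\<lambda>x. D k (f x)) has_derivative (\<lambda>v. D (Suc k) (f x) * frechet_derivative f (at x) v)) (at x)" for x
    using comp_deriv[OF fd D] .
  have "pd b (\<lambda>x. D k (f x)) = (\<lambda>x. D (Suc k) (f x) * iter_partial [b] f x)" for b
  proof -
    have "frechet_derivative (\<lambda>x. D k (f x)) (at x) = (\<lambda>v. D (Suc k) (f x) * frechet_derivative f (at x) v)" for x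
      using frechet_derivative_at[OF dk[of x]] by simp
    then show ?thesis by (simp add: pd_def iter_partial_def)
  qed
  moreover have "(\<lambda>x. D (Suc k) (f x) * iter_partial [b] f x) \<in> Aset f D" if "b \<in> Basis" for b
    using that by (intro Aset.mult Aset.base1 Aset.base2) auto
  ultimately show ?case using dk differentiableI by metis
next
  case (add g h)
  have dd: "((\<lambda>x. g x + h x) has_derivative (\<lambda>v. frechet_derivative g (at x) v + frechet_derivative h (at x) v)) (at x)" for x
    using add by (intro has_derivative_add) (auto simp: frechet_derivative_works[symmetric])
  have "frechet_derivative (\<lambda>x. g x + h x) (at x) b = frechet_derivative g (at x) b + frechet_derivative h (at x) b" for x b
    using frechet_derivative_at[OF dd[of x], symmetric] by simp
  then have "pd b (\<lambda>x. g x + h x) = (\<lambda>x. pd b g x + pd b h x)" for b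
    by (simp add: pd_def)
  then have "\<forall>b\<in>Basis. pd b (\<lambda>x. g x + h x) \<in> Aset f D"
    using add by (auto intro!: Aset.add)
  moreover have "\<forall>x. (\<lambda>x. g x + h x) differentiable (at x)"
    using dd differentiableI by blast
  ultimately show ?case by blast
next
  case (mult g h)
  have dd: "((\<lambda>x. g x * h x) has_derivative (\<lambda>v. g x * frechet_derivative h (at x) v + frechet_derivative g (at x) v * h x)) (at x)" for x
    using mult by (intro has_derivative_mult) (auto simp: frechet_derivative_works[symmetric])
  have "frechet_derivative (\<lambda>x. g x * h x) (at x) b = g x * frechet_derivative h (at x) b + frechet_derivative g (at x) b * h x" for x b
    using frechet_derivative_at[OF dd[of x], symmetric] by simp
  then have "pd b (\<lambda>x. g x * h x) = (\<lambda>x. g x * pd b h x + pd b g x * h x)" for b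
    by (simp add: pd_def)
  then have "\<forall>b\<in>Basis. pd b (\<lambda>x. g x * h x) \<in> Aset f D"
    using mult by (auto intro!: Aset.add Aset.mult)
  moreover have "\<forall>x. (\<lambda>x. g x * h x) differentiable (at x)"
    using dd differentiableI by blast
  ultimately show ?case by blast
qed

lemma Aset_iter:
  assumes sm: "smooth_fun f"
    and D: "\<forall>k x. (D k has_real_derivative D (Suc k) x) (at x)"
  shows "h \<in> Aset f D \<Longrightarrow> set vs \<subseteq> Basis \<Longrightarrow> iter_partial vs h \<in> Aset f D"
proof (induction vs arbitrary: h)
  case Nil then show ?case by (simp add: iter_partial_Nil)
next
  case (Cons v vs)
  then show ?case using Aset_closed[OF sm D, of h] by (simp add: iter_partial_Cons)
qed

lemma smooth_comp:
  assumes sm: "smooth_fun f"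
    and D: "\<forall>k x. (D k has_real_derivative D (Suc k) x) (at x)"
  shows "smooth_fun (\<lambda>x. D 0 (f x))"
  unfolding smooth_fun_def
  using Aset_iter[OF sm D] Aset_closed[OF sm D] Aset.base2[of D 0 f] by blast

lemma grad_sq_comp:
  assumes sm: "smooth_fun f"
    and D: "\<forall>k x. (D k has_real_derivative D (Suc k) x) (at x)"
  shows "grad_sq (\<lambda>x. D 0 (f x)) x = (D 1 (f x))\<^sup>2 * grad_sq f x"
proof -
  have fd: "f differentiable (at x)"
    using sm unfolding smooth_fun_def by (metis empty_subsetI iter_partial_Nil list.set(1))
  have "frechet_derivative (\<lambda>x. D 0 (f x)) (at x) = (\<lambda>v. D 1 (f x) * frechet_derivative f (at x) v)"
    using comp_deriv[OF fd D, of 0] frechet_derivative_at by fastforce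
  then show ?thesis
    by (simp add: grad_sq_def sum_distrib_left power_mult_distrib)
qed

lemma poly_Cinf:
  assumes "real_polynomial_function p"
  shows "\<exists>D. D 0 = p \<and> (\<forall>k x. (D k has_real_derivative D (Suc k) x) (at x))"
proof -
  define nx where "nx q = (SOME q'. real_polynomial_function q' \<and> (\<forall>x. (q has_real_derivative q' x) (at x)))" for q :: "real \<Rightarrow> real"
  have nx: "real_polynomial_function (nx q) \<and> (\<forall>x. (q has_real_derivative nx q x) (at x))"
    if "real_polynomial_function q" for q
    unfolding nx_def using someI_ex[OF has_real_derivative_polynomial_function[OF that]] .
  define D where "D k = (nx ^^ k) p" for k
  have "real_polynomial_function (D k)" for k
    by (induction k) (auto simp: D_def assms nx)
  then show ?thesis
    by (intro exI[of _ D]) (auto simp: D_def nx)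
qed


lemma poly_antideriv:
  assumes "real_polynomial_function q"
  obtains Q where "real_polynomial_function Q" "Q 0 = 0" "\<And>x. (Q has_real_derivative q x) (at x)"
proof -
  obtain a n where q: "q = (\<lambda>x. \<Sum>i\<le>n. a i * x^i)"
    using assms real_polynomial_function_iff_sum by blast
  define Q where "Q = (\<lambda>x::real. \<Sum>i\<le>n. a i / real (Suc i) * x ^ Suc i)"
  have "real_polynomial_function Q"
    unfolding Q_def by (intro real_polynomial_function_sum real_polynomial_function.intros
        real_polynomial_function_power) (auto intro: bounded_linear_ident)
  moreover have "Q 0 = 0" by (simp add: Q_def)
  moreover have "(Q has_real_derivative q x) (at x)" for x
  proof -
    have "(Q has_real_derivative (\<Sum>i\<le>n. a i / real (Suc i) * (real (Suc i) * x ^ (Suc i - Suc 0)))) (at x)"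
      unfolding Q_def by (intro DERIV_sum DERIV_cmult DERIV_pow)
    moreover have "(\<Sum>i\<le>n. a i / real (Suc i) * (real (Suc i) * x ^ i)) = q x"
      unfolding q by (intro sum.cong) auto
    ultimately show ?thesis by simp
  qed
  ultimately show ?thesis using that by blast
qed

lemma div_shrink:
  fixes a c \<eta> :: real
  assumes "0 < \<eta>" "\<bar>a\<bar> \<le> c"
  shows "\<bar>a / (1 + \<eta>)\<bar> \<le> c"
proof -
  have "\<bar>a / (1 + \<eta>)\<bar> = \<bar>a\<bar> / (1 + \<eta>)" using assms(1) by simp
  also have "\<dots> \<le> \<bar>a\<bar>" using assms(1) by (simp add: divide_le_eq algebra_simps)
  finally show ?thesis using assms(2) by linarith
qed

lemma div_shrink1:
  fixes a \<eta> :: real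
  assumes "0 < \<eta>"
  shows "\<bar>a\<bar> \<le> 1 + \<eta> \<Longrightarrow> \<bar>a / (1 + \<eta>)\<bar> \<le> 1"
  using assms by (simp add: abs_divide)

lemma div_shrink2:
  fixes a \<eta> :: real
  assumes "0 < \<eta>"
  shows "-\<eta> \<le> a \<Longrightarrow> -\<eta> \<le> a / (1 + \<eta>)"
proof -
  assume a: "-\<eta> \<le> a"
  have "-\<eta> / (1 + \<eta>) \<le> a / (1 + \<eta>)" using a assms by (intro divide_right_mono) auto
  moreover have "-\<eta> \<le> -\<eta> / (1 + \<eta>)"
  proof -
    have "\<eta> / (1 + \<eta>) \<le> \<eta>" using assms by (simp add: divide_le_eq)
    then show ?thesis by simp
  qed
  ultimately show ?thesis by linarith
qed

lemma poly_trunc: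
  fixes R M e :: real
  assumes R: "0 < R" and M: "0 < M" and e: "0 < e"
  obtains \<psi> where "real_polynomial_function \<psi>"
    "\<And>t d. \<bar>t\<bar> \<le> M \<Longrightarrow> (\<psi> has_real_derivative d) (at t) \<Longrightarrow> \<bar>d\<bar> \<le> 1"
    "\<And>t. \<bar>t\<bar> \<le> M \<Longrightarrow> \<bar>\<psi> t\<bar> \<le> R + e"
    "\<And>t. \<bar>t\<bar> \<le> M \<Longrightarrow> t * (t - \<psi> t) \<le> (if \<bar>t\<bar> > R then t\<^sup>2 else 0) + e"
proof -
  define \<delta> where "\<delta> = e/2"
  define \<theta> where "\<theta> t = max 0 (min 1 ((R + \<delta> - \<bar>t\<bar>)/\<delta>))" for t :: real
  define \<eta> where "\<eta> = e / (4 * (M+1)\<^sup>2)"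
  have \<delta>: "\<delta> > 0" using e by (simp add: \<delta>_def)
  have \<eta>: "\<eta> > 0" using e M by (simp add: \<eta>_def)
  have \<eta>M2: "\<eta> * M\<^sup>2 \<le> e/4"
  proof -
    have "M\<^sup>2 \<le> (M+1)\<^sup>2" using M by (intro power_mono) auto
    then have "e * M\<^sup>2 \<le> e * (M+1)\<^sup>2" using e by (intro mult_left_mono) auto
    then show ?thesis using M by (simp add: \<eta>_def field_simps)
  qed
  have \<eta>M: "\<eta> * M \<le> e/4"
  proof -
    have "M \<le> (M+1)\<^sup>2" using M by (simp add: power2_eq_square algebra_simps)
    then have "e * M \<le> e * (M+1)\<^sup>2" using e by (intro mult_left_mono) auto
    then show ?thesis using M by (simp add: \<eta>_def field_simps)
  qed
  have "continuous_on {-M..M} \<theta>" unfolding \<theta>_def by (intro continuous_intros) (use \<delta> in auto)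
  then obtain q where q: "real_polynomial_function q" "\<And>t. t \<in> {-M..M} \<Longrightarrow> \<bar>\<theta> t - q t\<bar> < \<eta>"
    using Stone_Weierstrass_real_polynomial_function[OF compact_Icc _ \<eta>] by blast
  obtain Q where Q: "real_polynomial_function Q" "Q 0 = 0" "\<And>x. (Q has_real_derivative q x) (at x)"
    using poly_antideriv[OF q(1)] by blast
  define \<psi> where "\<psi> x = Q x / (1 + \<eta>)" for x
  define \<psi>' where "\<psi>' x = q x / (1 + \<eta>)" for x
  have d\<psi>: "(\<psi> has_real_derivative \<psi>' x) (at x)" for x
    unfolding \<psi>_def \<psi>'_def using DERIV_cdivide[OF Q(3)] by blast
  have \<psi>0: "\<psi> 0 = 0" by (simp add: \<psi>_def Q(2))
  have poly: "real_polynomial_function \<psi>"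
    unfolding \<psi>_def using Q(1) by (intro real_polynomial_function_divide)
  have qb: "\<bar>\<theta> z - q z\<bar> < \<eta>" if "\<bar>z\<bar> \<le> M" for z using q(2)[of z] that by (auto simp: abs_le_iff)
  have \<theta>b: "0 \<le> \<theta> t" "\<theta> t \<le> 1" for t by (auto simp: \<theta>_def)
  have b1: "\<bar>\<psi>' z\<bar> \<le> 1" if "\<bar>z\<bar> \<le> M" for z
  proof -
    have "\<bar>q z\<bar> \<le> 1 + \<eta>" using qb[OF that] \<theta>b[of z] by linarith
    then show ?thesis unfolding \<psi>'_def using div_shrink1[OF \<eta>] by blast
  qed
  have b2: "\<psi>' z \<ge> -\<eta>" if "\<bar>z\<bar> \<le> M" for z
  proof -
    have "q z \<ge> -\<eta>" using qb[OF that] \<theta>b[of z] by linarith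
    then show ?thesis unfolding \<psi>'_def using div_shrink2[OF \<eta>] by blast
  qed
  have b3: "\<bar>\<psi>' z - 1\<bar> \<le> 2*\<eta>" if "\<bar>z\<bar> \<le> R" "\<bar>z\<bar> \<le> M" for z
  proof -
    have "\<theta> z = 1" using that \<delta> by (simp add: \<theta>_def)
    then have "\<bar>q z - 1 - \<eta>\<bar> \<le> 2 * \<eta>" using qb[OF that(2)] by linarith
    moreover have "\<psi>' z - 1 = (q z - 1 - \<eta>) / (1 + \<eta>)" using \<eta> by (simp add: \<psi>'_def field_simps)
    ultimately show ?thesis using div_shrink[OF \<eta>] by metis
  qed
  have b4: "\<bar>\<psi>' z\<bar> \<le> \<eta>" if "\<bar>z\<bar> \<ge> R + \<delta>" "\<bar>z\<bar> \<le> M" for z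
  proof -
    have "(R + \<delta> - \<bar>z\<bar>) / \<delta> \<le> 0" using that \<delta> by (intro divide_nonpos_pos) auto
    then have "\<theta> z = 0" by (simp add: \<theta>_def)
    then have "\<bar>q z\<bar> \<le> \<eta>" using qb[OF that(2)] by linarith
    then show ?thesis unfolding \<psi>'_def using div_shrink[OF \<eta>] by blast
  qed
  have mvt: "\<exists>z. min a b \<le> z \<and> z \<le> max a b \<and> \<psi> b - \<psi> a = (b - a) * \<psi>' z" for a b
  proof (cases a b rule: linorder_cases)
    case less
    obtain z where "a < z" "z < b" "\<psi> b - \<psi> a = (b - a) * \<psi>' z"
      using MVT2[OF less, of \<psi> \<psi>'] d\<psi> by blast
    then show ?thesis by (intro exI[of _ z]) auto
  next
    case equal
    then show ?thesis by auto
  next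
    case greater
    obtain z where "b < z" "z < a" "\<psi> a - \<psi> b = (a - b) * \<psi>' z"
      using MVT2[OF greater, of \<psi> \<psi>'] d\<psi> by blast
    then show ?thesis by (intro exI[of _ z]) (auto simp: algebra_simps)
  qed
  have from0: "\<exists>z. \<bar>z\<bar> \<le> \<bar>t\<bar> \<and> \<psi> t = t * \<psi>' z" for t
  proof -
    obtain z where z: "min 0 t \<le> z" "z \<le> max 0 t" "\<psi> t - \<psi> 0 = (t - 0) * \<psi>' z"
      using mvt[of 0 t] by blast
    have "\<bar>z\<bar> \<le> \<bar>t\<bar>" using z(1,2) by (auto simp: min_def max_def split: if_splits)
    then show ?thesis using z(3) \<psi>0 by auto
  qed
  show ?thesis
  proof (rule that[OF poly])
    fix t d assume t: "\<bar>t\<bar> \<le> M" and d: "(\<psi> has_real_derivative d) (at t)"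
    have "d = \<psi>' t" using DERIV_unique[OF d d\<psi>] .
    then show "\<bar>d\<bar> \<le> 1" using b1[OF t] by simp
  next
    fix t assume t: "\<bar>t\<bar> \<le> M"
    obtain z where z: "\<bar>z\<bar> \<le> \<bar>t\<bar>" "\<psi> t = t * \<psi>' z" using from0 by blast
    have zM: "\<bar>z\<bar> \<le> M" using z t by linarith
    have eq: "t * (t - \<psi> t) = t\<^sup>2 * (1 - \<psi>' z)" by (simp add: z power2_eq_square algebra_simps)
    have t2: "t\<^sup>2 \<le> M\<^sup>2" using t M abs_le_square_iff[of t M] by simp
    show "t * (t - \<psi> t) \<le> (if \<bar>t\<bar> > R then t\<^sup>2 else 0) + e"
    proof (cases "\<bar>t\<bar> > R")
      case True
      have "t\<^sup>2 * (1 - \<psi>' z) \<le> t\<^sup>2 * (1 + \<eta>)" using b2[OF zM] by (intro mult_left_mono) auto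
      also have "\<dots> = t\<^sup>2 + \<eta> * t\<^sup>2" by (simp add: algebra_simps)
      also have "\<eta> * t\<^sup>2 \<le> \<eta> * M\<^sup>2" using t2 \<eta> by (intro mult_left_mono) auto
      finally show ?thesis using True eq \<eta>M2 e by simp
    next
      case False
      have "t\<^sup>2 * (1 - \<psi>' z) \<le> t\<^sup>2 * (2 * \<eta>)" using b3[of z] zM z(1) False by (intro mult_left_mono) auto
      also have "\<dots> \<le> M\<^sup>2 * (2 * \<eta>)" using t2 \<eta> by (intro mult_right_mono) auto
      finally show ?thesis using False eq \<eta>M2 e by (simp add: algebra_simps)
    qed
  next
    fix t assume t: "\<bar>t\<bar> \<le> M"
    have small: "\<bar>\<psi> u\<bar> \<le> \<bar>u\<bar>" if "\<bar>u\<bar> \<le> M" for u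
    proof -
      obtain z where z: "\<bar>z\<bar> \<le> \<bar>u\<bar>" "\<psi> u = u * \<psi>' z" using from0 by blast
      have "\<bar>\<psi>' z\<bar> \<le> 1" using b1[of z] z(1) that by simp
      then show ?thesis using z(2) by (simp add: abs_mult mult_left_le)
    qed
    show "\<bar>\<psi> t\<bar> \<le> R + e"
    proof (cases "\<bar>t\<bar> \<le> R + \<delta>")
      case True
      then show ?thesis using small[OF t] \<delta>_def e by simp
    next
      case False
      define s where "s = (if t > 0 then R + \<delta> else -(R + \<delta>))"
      have s: "\<bar>s\<bar> = R + \<delta>" using R \<delta> by (simp add: s_def)
      obtain z where z: "min s t \<le> z" "z \<le> max s t" "\<psi> t - \<psi> s = (t - s) * \<psi>' z" using mvt by blast
      have zz: "\<bar>z\<bar> \<ge> R + \<delta>" "\<bar>z\<bar> \<le> M" using z(1,2) False t R \<delta> by (auto simp: s_def min_def max_def split: if_splits)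
      have ts: "\<bar>t - s\<bar> \<le> M" using False t R \<delta> by (auto simp: s_def)
      have "\<bar>\<psi> t\<bar> \<le> \<bar>\<psi> s\<bar> + \<bar>t - s\<bar> * \<bar>\<psi>' z\<bar>" using z(3) by (simp add: abs_mult[symmetric])
      also have "\<dots> \<le> (R + \<delta>) + M * \<eta>"
        using small[of s] s ts b4[OF zz] False t \<eta> by (intro add_mono mult_mono) auto
      finally show ?thesis using \<eta>M \<delta>_def e by (simp add: mult.commute)
    qed
  qed
qed


lemma (in prob_space) sq_expand:
  fixes u :: "'a \<Rightarrow> real"
  assumes "integrable M u" "integrable M (\<lambda>x. (u x)\<^sup>2)"
  shows "(\<integral>x. (u x - c)\<^sup>2 \<partial>M) = (\<integral>x. (u x)\<^sup>2 \<partial>M) - 2*c*(\<integral>x. u x \<partial>M) + c\<^sup>2"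
proof -
  have "(\<lambda>x. (u x - c)\<^sup>2) = (\<lambda>x. ((u x)\<^sup>2 - 2*c*u x) + c\<^sup>2)"
    by (simp add: fun_eq_iff power2_diff algebra_simps)
  then have "(\<integral>x. (u x - c)\<^sup>2 \<partial>M) = (\<integral>x. ((u x)\<^sup>2 - 2*c*u x) + c\<^sup>2 \<partial>M)" by simp
  also have "\<dots> = (\<integral>x. (u x)\<^sup>2 - 2*c*u x \<partial>M) + c\<^sup>2"
    using assms by (subst Bochner_Integration.integral_add) (auto simp: prob_space)
  also have "(\<integral>x. (u x)\<^sup>2 - 2*c*u x \<partial>M) = (\<integral>x. (u x)\<^sup>2 \<partial>M) - 2*c*(\<integral>x. u x \<partial>M)"
    using assms by (subst Bochner_Integration.integral_diff) auto
  finally show ?thesis .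
qed

lemma var_trunc_bound:
  fixes \<mu> :: "'a measure" and g h :: "'a \<Rightarrow> real"
  assumes P: "prob_space \<mu>"
    and gm: "g \<in> borel_measurable \<mu>" and gb: "\<And>x. \<bar>g x\<bar> \<le> K" and g0: "(\<integral>x. g x \<partial>\<mu>) = 0"
    and hm: "h \<in> borel_measurable \<mu>" and hb: "\<And>x. \<bar>h x\<bar> \<le> K"
  shows "(\<integral>x. (g x)\<^sup>2 \<partial>\<mu>) \<le> (\<integral>x. (h x - (\<integral>y. h y \<partial>\<mu>))\<^sup>2 \<partial>\<mu>) + 2 * (\<integral>x. g x * (g x - h x) \<partial>\<mu>)"
proof -
  interpret prob_space \<mu> by fact
  have intg: "integrable \<mu> u" if "u \<in> borel_measurable \<mu>" "\<And>x. \<bar>u x\<bar> \<le> B" for u :: "'a \<Rightarrow> real" and B :: real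
    using that by (intro integrable_const_bound[where B=B]) auto
  have K: "0 \<le> K" using gb[of undefined] by linarith
  have prodb: "\<bar>a * b\<bar> \<le> A * B" if "\<bar>a\<bar> \<le> A" "\<bar>b\<bar> \<le> B" for a b A B :: real
    using that by (simp add: abs_mult) (intro mult_mono, auto)
  have ig: "integrable \<mu> g" using intg[OF gm gb] .
  have ih: "integrable \<mu> h" using intg[OF hm hb] .
  have ig2: "integrable \<mu> (\<lambda>x. (g x)\<^sup>2)"
  proof -
    have pb: "\<bar>(g x)\<^sup>2\<bar> \<le> K*K" for x using prodb[OF gb[of x] gb[of x]] by (simp add: power2_eq_square)
    show ?thesis by (rule intg[OF _ pb]) (use gm in auto)
  qed
  have ih2: "integrable \<mu> (\<lambda>x. (h x)\<^sup>2)"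
  proof -
    have pb: "\<bar>(h x)\<^sup>2\<bar> \<le> K*K" for x using prodb[OF hb[of x] hb[of x]] by (simp add: power2_eq_square)
    show ?thesis by (rule intg[OF _ pb]) (use hm in auto)
  qed
  have dgb: "\<bar>h x - g x\<bar> \<le> 2*K" for x using gb[of x] hb[of x] by linarith
  have dgb': "\<bar>g x - h x\<bar> \<le> 2*K" for x using gb[of x] hb[of x] by linarith
  have ihg: "integrable \<mu> (\<lambda>x. h x - g x)" using ig ih by auto
  have ihg2: "integrable \<mu> (\<lambda>x. (h x - g x)\<^sup>2)"
  proof -
    have pb: "\<bar>(h x - g x)\<^sup>2\<bar> \<le> 2*K*(2*K)" for x using prodb[OF dgb[of x] dgb[of x]] by (simp add: power2_eq_square)
    show ?thesis by (rule intg[OF _ pb]) (use gm hm in auto)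
  qed
  have igg: "integrable \<mu> (\<lambda>x. g x * (g x - h x))"
  proof -
    have pb: "\<bar>g x * (g x - h x)\<bar> \<le> K*(2*K)" for x using prodb[OF gb[of x] dgb'[of x]] by (simp add: power2_eq_square)
    show ?thesis by (rule intg[OF _ pb]) (use gm hm in auto)
  qed
  define a where "a = (\<integral>y. h y \<partial>\<mu>)"
  have E1: "(\<integral>x. (h x - a)\<^sup>2 \<partial>\<mu>) = (\<integral>x. (h x)\<^sup>2 \<partial>\<mu>) - a\<^sup>2"
    using sq_expand[OF ih ih2, of a] by (simp add: a_def power2_eq_square)
  have ihga: "(\<integral>x. h x - g x \<partial>\<mu>) = a" using ig ih g0 by (simp add: a_def)
  have "0 \<le> (\<integral>x. (h x - g x - a)\<^sup>2 \<partial>\<mu>)" by simp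
  also have "\<dots> = (\<integral>x. (h x - g x)\<^sup>2 \<partial>\<mu>) - a\<^sup>2"
    using sq_expand[OF ihg ihg2, of a] ihga by (simp add: power2_eq_square)
  finally have E2: "a\<^sup>2 \<le> (\<integral>x. (h x - g x)\<^sup>2 \<partial>\<mu>)" by simp
  have "(\<lambda>x. (g x)\<^sup>2) = (\<lambda>x. (2 * (g x * (g x - h x)) - (h x - g x)\<^sup>2) + (h x)\<^sup>2)"
    by (simp add: fun_eq_iff power2_eq_square algebra_simps)
  then have "(\<integral>x. (g x)\<^sup>2 \<partial>\<mu>) = (\<integral>x. (2 * (g x * (g x - h x)) - (h x - g x)\<^sup>2) + (h x)\<^sup>2 \<partial>\<mu>)" by simp
  also have "\<dots> = 2 * (\<integral>x. g x * (g x - h x) \<partial>\<mu>) - (\<integral>x. (h x - g x)\<^sup>2 \<partial>\<mu>) + (\<integral>x. (h x)\<^sup>2 \<partial>\<mu>)"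
    using igg ihg2 ih2 by simp
  finally show ?thesis using E1 E2 unfolding a_def by linarith
qed


lemma tail_bound:
  fixes R p t :: real
  assumes R: "0 < R" and p: "2 < p"
  shows "(if \<bar>t\<bar> > R then t\<^sup>2 else 0) \<le> \<bar>t\<bar> powr p * R powr (2 - p)"
proof (cases "\<bar>t\<bar> > R")
  case True
  have t: "0 < \<bar>t\<bar>" using True R by linarith
  have h1: "\<bar>t\<bar> powr p = \<bar>t\<bar> powr 2 * \<bar>t\<bar> powr (p - 2)" using powr_add[of "\<bar>t\<bar>" 2 "p - 2"] by simp
  have h2: "\<bar>t\<bar> powr 2 = t\<^sup>2" using t by (simp add: powr_numeral)
  have 1: "\<bar>t\<bar> powr p = t\<^sup>2 * \<bar>t\<bar> powr (p - 2)" using h1 h2 by simp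
  have 2: "R powr (2 - p) = inverse (R powr (p - 2))" by (simp add: powr_minus[symmetric])
  have 3: "R powr (p - 2) \<le> \<bar>t\<bar> powr (p - 2)" using True R p by (intro powr_mono2) auto
  have 4: "0 < R powr (p - 2)" using R by simp
  have "1 \<le> \<bar>t\<bar> powr (p - 2) * inverse (R powr (p - 2))"
    using 3 4 by (simp add: field_simps)
  then have "t\<^sup>2 * 1 \<le> t\<^sup>2 * (\<bar>t\<bar> powr (p - 2) * inverse (R powr (p - 2)))"
    by (intro mult_left_mono) auto
  then show ?thesis using True 1 2 by (simp add: mult.assoc)
qed simp

lemma powr_alg:
  fixes p s N :: real
  assumes p: "2 < p" and s: "0 < s" and N: "0 < N"
  defines "r \<equiv> s powr (p / (p - 2)) / 2 powr ((3 * p - 2) / (p - 2))"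
  defines "R \<equiv> (4 / s) powr (1 / (p - 2)) * N"
  shows "r * (2 * R)\<^sup>2 + 2 * (N powr p * R powr (2 - p)) = s * N\<^sup>2"
proof -
  define q where "q = p - 2"
  have q: "0 < q" using p by (simp add: q_def)
  define a where "a = ln s"
  define b where "b = ln (2::real)"
  define c where "c = ln N"
  have l4s: "ln (4 / s) = 2 * b - a"
  proof -
    have "ln (4::real) = ln (2 * 2)" by simp
    also have "\<dots> = 2 * b" by (subst ln_mult) (auto simp: b_def)
    finally show ?thesis using s by (simp add: ln_div a_def)
  qed
  have R0: "0 < R" using s N by (simp add: R_def)
  have lR: "ln R = (2 * b - a) / q + c"
    using s N by (simp add: R_def ln_mult ln_powr l4s q_def c_def)
  have pq: "p = q + 2" by (simp add: q_def)
  have lr: "ln r = (q + 2) / q * a - (3 * q + 4) / q * b"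
    using s by (simp add: r_def ln_div ln_powr a_def b_def q_def algebra_simps)
  have r0: "0 < r" using s by (simp add: r_def)
  have e1: "r * R\<^sup>2 = exp (a - 3 * b + 2 * c)"
  proof -
    have "exp (ln r + 2 * ln R) = exp (ln r) * exp (ln R) ^ 2" by (simp only: exp_add exp_double)
    then have "r * R\<^sup>2 = exp (ln r + 2 * ln R)" using r0 R0 by simp
    also have "ln r + 2 * ln R = a - 3 * b + 2 * c"
      unfolding lr lR using q by (simp add: field_simps)
    finally show ?thesis .
  qed
  have e2: "N powr p * R powr (2 - p) = exp (2 * c - (2 * b - a))"
  proof -
    have "N powr p * R powr (2 - p) = exp (p * c + (2 - p) * ln R)"
      using N R0 by (simp add: powr_def exp_add c_def)
    also have "p * c + (2 - p) * ln R = 2 * c - (2 * b - a)"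
      unfolding lR pq using q by (simp add: field_simps)
    finally show ?thesis .
  qed
  have ea: "exp a = s" using s by (simp add: a_def)
  have eb: "exp b = 2" by (simp add: b_def)
  have ec: "exp c = N" using N by (simp add: c_def)
  have e3: "exp (3 * b) = exp b ^ 3" using exp_of_nat_mult[of 3 b] by simp
  have x1: "exp (a - 3 * b + 2 * c) = s * N\<^sup>2 / 8"
  proof -
    have "exp (a - 3 * b + 2 * c) = exp a / exp (3 * b) * exp c ^ 2"
      by (simp only: exp_add exp_diff exp_double)
    then show ?thesis by (simp add: ea eb ec e3)
  qed
  have x2: "exp (2 * c - (2 * b - a)) = s * N\<^sup>2 / 4"
  proof -
    have "exp (2 * c - (2 * b - a)) = exp c ^ 2 / (exp b ^ 2 / exp a)"
      by (simp only: exp_add exp_diff exp_double)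
    then show ?thesis by (simp add: ea eb ec)
  qed
  have "r * (2 * R)\<^sup>2 = 4 * (r * R\<^sup>2)" by (simp add: power2_eq_square)
  then show ?thesis using e1 e2 x1 x2 by simp
qed


theorem lemma2p6:
  fixes \<mu> :: "'a::euclidean_space measure" and \<beta> :: "real \<Rightarrow> ennreal"
    and p s :: real and f :: "'a \<Rightarrow> real"
  assumes "prob_space \<mu>" and "sets \<mu> = sets borel"
    and "weak_poincare \<mu> \<beta>"
    and "p > 2" and "s > 0"
    and "smooth_fun f" and "bounded (range f)"
  shows "ennreal (var \<mu> f)
     \<le> \<beta> (s powr (p / (p - 2)) / 2 powr ((3 * p - 2) / (p - 2))) * (\<integral>\<^sup>+x. ennreal (grad_sq f x) \<partial>\<mu>)
       + ennreal (s * (Lp_norm \<mu> p (\<lambda>x. f x - (\<integral>y. f y \<partial>\<mu>)))\<^sup>2)"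
proof -
  interpret P: prob_space \<mu> by fact
  have wp: "\<And>r u. 0 < r \<Longrightarrow> smooth_fun u \<Longrightarrow> bounded (range u) \<Longrightarrow>
      ennreal (var \<mu> u) \<le> \<beta> r * (\<integral>\<^sup>+x. ennreal (grad_sq u x) \<partial>\<mu>) + ennreal (r * (osc u)\<^sup>2)"
    using assms(3) unfolding weak_poincare_def by blast
  have meas: "u \<in> borel_measurable \<mu>" if "u \<in> borel_measurable borel" for u :: "'a \<Rightarrow> real"
    using that by (simp add: measurable_cong_sets[OF assms(2) refl])
  have fdiff: "f differentiable (at x)" for x
    using assms(6) unfolding smooth_fun_def by (metis empty_subsetI iter_partial_Nil list.set(1))
  have fcont: "continuous_on UNIV f"
    using fdiff by (intro continuous_at_imp_continuous_on ballI differentiable_imp_continuous_within) auto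
  have fm: "f \<in> borel_measurable \<mu>" using meas borel_measurable_continuous_onI[OF fcont] by blast
  obtain B where B: "\<And>x. \<bar>f x\<bar> \<le> B" using assms(7) unfolding bounded_iff by auto
  define m where "m = (\<integral>y. f y \<partial>\<mu>)"
  define g where "g x = f x - m" for x
  define M where "M = B + \<bar>m\<bar> + 1"
  have M: "0 < M" using B[of undefined] by (simp add: M_def)
  have gM: "\<bar>g x\<bar> \<le> M" for x using B[of x] by (simp add: g_def M_def)
  have gm: "g \<in> borel_measurable \<mu>" using fm by (simp add: g_def[abs_def])
  have intb: "integrable \<mu> u" if "u \<in> borel_measurable \<mu>" "\<And>x. \<bar>u x\<bar> \<le> K" for u :: "'a \<Rightarrow> real" and K
    using that by (intro P.integrable_const_bound[of _ K]) auto
  have fi: "integrable \<mu> f" using intb[OF fm B] .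
  have g0: "(\<integral>x. g x \<partial>\<mu>) = 0"
    using fi by (simp add: g_def m_def Bochner_Integration.integral_diff P.prob_space)
  have varf: "var \<mu> f = (\<integral>x. (g x)\<^sup>2 \<partial>\<mu>)" by (simp add: var_def g_def m_def)
  define r where "r = s powr (p / (p - 2)) / 2 powr ((3 * p - 2) / (p - 2))"
  have r: "0 < r" using assms(5) by (simp add: r_def)
  define E where "E = (\<integral>\<^sup>+x. ennreal (grad_sq f x) \<partial>\<mu>)"
  define I where "I = (\<integral>x. \<bar>g x\<bar> powr p \<partial>\<mu>)"
  have Ipm: "(\<lambda>x. \<bar>g x\<bar> powr p) \<in> borel_measurable \<mu>" using gm by measurable
  have Ipi: "integrable \<mu> (\<lambda>x. \<bar>g x\<bar> powr p)"
  proof (rule intb[OF Ipm])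
    fix x show "\<bar>\<bar>g x\<bar> powr p\<bar> \<le> M powr p" using gM[of x] assms(4) by (simp add: powr_mono2)
  qed
  have I0: "0 \<le> I" unfolding I_def by (intro Bochner_Integration.integral_nonneg) auto
  have N: "Lp_norm \<mu> p (\<lambda>x. f x - (\<integral>y. f y \<partial>\<mu>)) = I powr (1 / p)"
    by (simp add: Lp_norm_def I_def g_def m_def)
  have goal_eq: "\<beta> (s powr (p / (p - 2)) / 2 powr ((3 * p - 2) / (p - 2))) * (\<integral>\<^sup>+x. ennreal (grad_sq f x) \<partial>\<mu>)
       + ennreal (s * (Lp_norm \<mu> p (\<lambda>x. f x - (\<integral>y. f y \<partial>\<mu>)))\<^sup>2) = \<beta> r * E + ennreal (s * (I powr (1/p))\<^sup>2)"
    by (simp add: N r_def E_def)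
  show ?thesis
  proof (cases "\<beta> r * E = \<top>")
    case True
    then show ?thesis unfolding goal_eq by simp
  next
    case False
    then obtain C where C: "\<beta> r * E = ennreal C" "0 \<le> C" by (cases "\<beta> r * E") auto
    have key: "var \<mu> f \<le> C + r * (2 * (R + e))\<^sup>2 + 2 * (I * R powr (2 - p) + e)" if R: "0 < R" and e: "0 < e" for R e
    proof -
      obtain \<psi> where \<psi>: "real_polynomial_function \<psi>"
        "\<And>t d. \<bar>t\<bar> \<le> M \<Longrightarrow> (\<psi> has_real_derivative d) (at t) \<Longrightarrow> \<bar>d\<bar> \<le> 1"
        "\<And>t. \<bar>t\<bar> \<le> M \<Longrightarrow> \<bar>\<psi> t\<bar> \<le> R + e"
        "\<And>t. \<bar>t\<bar> \<le> M \<Longrightarrow> t * (t - \<psi> t) \<le> (if \<bar>t\<bar> > R then t\<^sup>2 else 0) + e"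
        using poly_trunc[OF R M e] by blast
      obtain D where D0: "D 0 = \<psi>" and D: "\<forall>k x. (D k has_real_derivative D (Suc k) x) (at x)"
        using poly_Cinf[OF \<psi>(1)] by blast
      define D' where "D' k t = D k (t - m)" for k t
      have D': "\<forall>k x. (D' k has_real_derivative D' (Suc k) x) (at x)"
      proof (intro allI)
        fix k x
        have "((\<lambda>t. t - m) has_real_derivative 1) (at x)" by (auto intro!: derivative_eq_intros)
        from DERIV_chain2[OF D[rule_format, of k "x - m"] this]
        show "(D' k has_real_derivative D' (Suc k) x) (at x)" by (simp add: D'_def[abs_def])
      qed
      define h where "h x = \<psi> (g x)" for x
      have h_eq: "(\<lambda>x. D' 0 (f x)) = h" by (simp add: D'_def h_def g_def D0 fun_eq_iff)
      have hs: "smooth_fun h" using smooth_comp[OF assms(6) D'] h_eq by simp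
      have hb: "\<bar>h x\<bar> \<le> R + e" for x using \<psi>(3)[OF gM[of x]] by (simp add: h_def)
      have hbd: "bounded (range h)" unfolding bounded_iff using hb by auto
      have grad: "grad_sq h x \<le> grad_sq f x" for x
      proof -
        have "(D 0 has_real_derivative D (Suc 0) (g x)) (at (g x))" using D by blast
        then have "(\<psi> has_real_derivative D 1 (g x)) (at (g x))" using D0 by simp
        then have d1: "\<bar>D 1 (g x)\<bar> \<le> 1" using \<psi>(2)[OF gM[of x]] by blast
        have "(D 1 (g x))\<^sup>2 \<le> 1" using d1 abs_square_le_1 by blast
        then have "(D' 1 (f x))\<^sup>2 \<le> 1" by (simp add: D'_def g_def)
        moreover have "0 \<le> grad_sq f x" by (simp add: grad_sq_def sum_nonneg)
        moreover have "grad_sq h x = (D' 1 (f x))\<^sup>2 * grad_sq f x"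
          using grad_sq_comp[OF assms(6) D', of x] h_eq by simp
        ultimately show ?thesis by (simp add: mult_left_le_one_le)
      qed
      have Eh: "(\<integral>\<^sup>+x. ennreal (grad_sq h x) \<partial>\<mu>) \<le> E"
        unfolding E_def by (intro nn_integral_mono ennreal_leI grad)
      have hb1: "h x \<le> R + e" "-(R + e) \<le> h x" for x using hb[of x] by (auto simp: abs_le_iff)
      have ba: "bdd_above (range h)" by (rule bdd_aboveI2) (rule hb1(1))
      have bb: "bdd_below (range h)" by (rule bdd_belowI2) (rule hb1(2))
      have sup: "(SUP x. h x) \<le> R + e" using hb1 by (intro cSUP_least) auto
      have inf: "-(R + e) \<le> (INF x. h x)" using hb1 by (intro cINF_greatest) auto
      have "h undefined \<le> (SUP x. h x)" using ba by (intro cSUP_upper) auto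
      moreover have "(INF x. h x) \<le> h undefined" using bb by (intro cINF_lower) auto
      ultimately have osc0: "0 \<le> osc h" by (simp add: osc_def)
      have osc1: "osc h \<le> 2 * (R + e)" using sup inf by (simp add: osc_def)
      have osc2: "(osc h)\<^sup>2 \<le> (2 * (R + e))\<^sup>2" using osc0 osc1 by (intro power_mono)
      have "ennreal (var \<mu> h) \<le> \<beta> r * (\<integral>\<^sup>+x. ennreal (grad_sq h x) \<partial>\<mu>) + ennreal (r * (osc h)\<^sup>2)"
        using wp[OF r hs hbd] .
      also have "\<dots> \<le> \<beta> r * E + ennreal (r * (2 * (R + e))\<^sup>2)"
        using Eh osc2 r by (intro add_mono mult_left_mono ennreal_leI) auto
      also have "\<dots> = ennreal (C + r * (2 * (R + e))\<^sup>2)" using C r by (simp add: ennreal_plus)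
      finally have varh: "var \<mu> h \<le> C + r * (2 * (R + e))\<^sup>2"
        using C r by (subst (asm) ennreal_le_iff) auto
      have \<psi>c: "continuous_on UNIV \<psi>"
        using D D0 by (intro continuous_at_imp_continuous_on ballI) (metis DERIV_isCont)
      have hm: "h \<in> borel_measurable \<mu>"
        unfolding h_def using borel_measurable_continuous_on[OF \<psi>c gm] .
      have gK: "\<bar>g x\<bar> \<le> M + (R + e)" for x using gM[of x] R e by linarith
      have hK: "\<bar>h x\<bar> \<le> M + (R + e)" for x using hb[of x] M by linarith
      have vt: "(\<integral>x. (g x)\<^sup>2 \<partial>\<mu>) \<le> (\<integral>x. (h x - (\<integral>y. h y \<partial>\<mu>))\<^sup>2 \<partial>\<mu>) + 2 * (\<integral>x. g x * (g x - h x) \<partial>\<mu>)"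
        using var_trunc_bound[OF assms(1) gm gK g0 hm hK] .
      have pw: "g x * (g x - h x) \<le> \<bar>g x\<bar> powr p * R powr (2 - p) + e" for x
        using \<psi>(4)[OF gM[of x]] tail_bound[OF R assms(4), of "g x"] by (simp add: h_def)
      have ggi: "integrable \<mu> (\<lambda>x. g x * (g x - h x))"
      proof (rule intb)
        show "(\<lambda>x. g x * (g x - h x)) \<in> borel_measurable \<mu>" using gm hm by measurable
        fix x
        have "\<bar>g x - h x\<bar> \<le> M + (R + e)" using gM[of x] hb[of x] by linarith
        then show "\<bar>g x * (g x - h x)\<bar> \<le> M * (M + (R + e))"
          unfolding abs_mult using gM[of x] by (intro mult_mono) auto
      qed
      have "(\<integral>x. g x * (g x - h x) \<partial>\<mu>) \<le> (\<integral>x. \<bar>g x\<bar> powr p * R powr (2 - p) + e \<partial>\<mu>)"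
        using ggi Ipi pw by (intro integral_mono) auto
      also have "\<dots> = I * R powr (2 - p) + e"
        using Ipi by (simp add: Bochner_Integration.integral_add P.prob_space I_def)
      finally have tail: "(\<integral>x. g x * (g x - h x) \<partial>\<mu>) \<le> I * R powr (2 - p) + e" .
      have "var \<mu> h = (\<integral>x. (h x - (\<integral>y. h y \<partial>\<mu>))\<^sup>2 \<partial>\<mu>)" by (simp add: var_def)
      then have "var \<mu> f \<le> var \<mu> h + 2 * (\<integral>x. g x * (g x - h x) \<partial>\<mu>)" using varf vt by simp
      also have "\<dots> \<le> (C + r * (2 * (R + e))\<^sup>2) + 2 * (I * R powr (2 - p) + e)"
        using varh tail by (intro add_mono) auto
      finally show ?thesis .
    qed
    have bound: "var \<mu> f \<le> C + r * (2 * R)\<^sup>2 + 2 * (I * R powr (2 - p))" if R: "0 < R" for R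
    proof (rule field_le_epsilon)
      fix d :: real assume d: "0 < d"
      define K where "K = 8 * r * R + 4 * r + 2"
      have "0 < r * R" using r R by simp
      then have K: "0 < K" using r by (simp add: K_def)
      define e where "e = min 1 (d / K)"
      have dK: "0 < d / K" using d K by simp
      have e1: "0 < e" using dK by (simp add: e_def)
      have e2: "e \<le> 1" by (simp add: e_def)
      have "e \<le> d / K" by (simp add: e_def)
      then have "e * K \<le> d / K * K" using K by (intro mult_right_mono) auto
      then have e3: "e * K \<le> d" using K by simp
      note e = e1 e2 e3
      have ee: "r * (e * e) \<le> r * e" using e r by (intro mult_left_mono) (auto simp: mult_le_one)
      have "r * (2 * (R + e))\<^sup>2 + 2 * e - (r * (2 * R)\<^sup>2 + e * K) = 4 * (r * (e * e)) - 4 * (r * e)"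
        by (simp add: K_def power2_eq_square algebra_simps)
      then have "r * (2 * (R + e))\<^sup>2 + 2 * e \<le> r * (2 * R)\<^sup>2 + e * K" using ee by linarith
      then have ineq: "r * (2 * (R + e))\<^sup>2 + 2 * e \<le> r * (2 * R)\<^sup>2 + d" using e(3) by linarith
      have "var \<mu> f \<le> C + r * (2 * (R + e))\<^sup>2 + 2 * (I * R powr (2 - p) + e)" using key[OF R e(1)] .
      also have "\<dots> = C + 2 * (I * R powr (2 - p)) + (r * (2 * (R + e))\<^sup>2 + 2 * e)" by (simp add: algebra_simps)
      also have "\<dots> \<le> C + 2 * (I * R powr (2 - p)) + (r * (2 * R)\<^sup>2 + d)" using ineq by simp
      finally show "var \<mu> f \<le> C + r * (2 * R)\<^sup>2 + 2 * (I * R powr (2 - p)) + d" by (simp add: algebra_simps)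
    qed
    show ?thesis
    proof (cases "I = 0")
      case True
      have "var \<mu> f \<le> C"
      proof (rule field_le_epsilon)
        fix d :: real assume d: "0 < d"
        define R where "R = sqrt (d / (4 * r))"
        have R: "0 < R" using d r by (simp add: R_def)
        have "r * (2 * R)\<^sup>2 = d" using d r by (simp add: R_def power_mult_distrib)
        then show "var \<mu> f \<le> C + d" using bound[OF R] True by simp
      qed
      then show ?thesis unfolding goal_eq using True C by simp
    next
      case False
      then have Ip: "0 < I" using I0 by simp
      define Nn where "Nn = I powr (1 / p)"
      have Nn: "0 < Nn" using Ip by (simp add: Nn_def)
      have INn: "I = Nn powr p" using Ip assms(4) by (simp add: Nn_def powr_powr)
      define R where "R = (4 / s) powr (1 / (p - 2)) * Nn"
      have R: "0 < R" using assms(5) Nn by (simp add: R_def)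
      have "r * (2 * R)\<^sup>2 + 2 * (I * R powr (2 - p)) = s * Nn\<^sup>2"
        unfolding INn R_def r_def using powr_alg[OF assms(4) assms(5) Nn] by simp
      then have "var \<mu> f \<le> C + s * Nn\<^sup>2" using bound[OF R] by linarith
      then have "ennreal (var \<mu> f) \<le> ennreal (C + s * Nn\<^sup>2)" by (rule ennreal_leI)
      also have "\<dots> = \<beta> r * E + ennreal (s * Nn\<^sup>2)" using C assms(5) by (simp add: ennreal_plus)
      finally show ?thesis unfolding goal_eq Nn_def .
    qed
  qed
qed

end
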